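(* Let $\pi\in\mathcal{S}_n$, let $s$ be the position with $\pi_s=1$, let $\mathsf{D}(\pi)=\{i\in\{1,\dots,n-1\}:\pi_i>\pi_{i+1}\}$ be the descent set of $\pi$ and $d=|\mathsf{D}(\pi)|$. Then $\pi$ avoids each of the patterns $1243$, $2143$ and $231$ if and only if one of the following holds: (i) $s>d$ and $\mathsf{D}(\pi)=\{1,2,\dots,d\}$; (ii) $s\le d$, $\mathsf{D}(\pi)=\{1,2,\dots,s-1,s+1,s+2,\dots,d+1\}$, and $\pi_{s-1}>\pi_{s+1}$ if $1<s<n$.
   Context: A permutation $\pi\in\mathcal{S}_n$ avoids $\tau\in\mathcal{S}_k$ if there are no indices $i_1<\dots<i_k$ with $\pi_{i_1}\cdots\pi_{i_k}$ in the same relative order as $\tau_1\cdots\tau_k$. *)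

theory Defs
  imports Main
begin

text \<open>A permutation of [n] is represented as a list p of length n with p ! (i-1) = pi_i.\<close>
definition is_perm :: "nat \<Rightarrow> nat list \<Rightarrow> bool" where
  "is_perm n p \<longleftrightarrow> length p = n \<and> distinct p \<and> set p = {1..n}"

definition contains :: "nat list \<Rightarrow> nat list \<Rightarrow> bool" where
  "contains p tau \<longleftrightarrow> (\<exists>idx. length idx = length tau \<and> sorted_wrt (<) idx
      \<and> (\<forall>j \<in> set idx. j < length p)
      \<and> (\<forall>a < length tau. \<forall>b < length tau.
            (p ! (idx ! a) < p ! (idx ! b)) \<longleftrightarrow> (tau ! a < tau ! b)))"

definition avoids :: "nat list \<Rightarrow> nat list \<Rightarrow> bool" where
  "avoids p tau \<longleftrightarrow> \<not> contains p tau"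

definition descents :: "nat list \<Rightarrow> nat set" where
  "descents p = {i \<in> {1..length p - 1}. p ! (i - 1) > p ! i}"

end

theory Submission
  imports Defs
begin

lemma idx_facts:
  assumes "length idx = 4" "sorted_wrt (<) idx" "\<forall>j\<in>set idx. j < length p"
  shows "idx ! 0 < idx ! 1" "idx ! 1 < idx ! 2" "idx ! 2 < idx ! 3" "idx ! 3 < length p"
  using assms by (auto simp: sorted_wrt_iff_nth_less)

lemma c1243E:
  assumes "contains p [1,2,4,3]"
  obtains i j k l where "i<j" "j<k" "k<l" "l<length p" "p!i < p!j" "p!j < p!l" "p!l < p!k"
proof -
  obtain idx where H: "length idx = length [1,2,4,3::nat] \<and> sorted_wrt (<) idx \<and> (\<forall>j\<in>set idx. j < length p)
      \<and> (\<forall>a < length [1,2,4,3::nat]. \<forall>b < length [1,2,4,3::nat]. (p ! (idx ! a) < p ! (idx ! b)) \<longleftrightarrow> ([1,2,4,3::nat] ! a < [1,2,4,3::nat] ! b))"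
    using assms unfolding contains_def by (rule exE)
  have L: "length idx = 4" and S: "sorted_wrt (<) idx" and B: "\<forall>j\<in>set idx. j < length p"
    and C: "\<forall>a < 4. \<forall>b < 4. (p ! (idx ! a) < p ! (idx ! b)) \<longleftrightarrow> ([1,2,4,3::nat] ! a < [1,2,4,3::nat] ! b)"
    using H by (simp_all only: list.size numeral_eq_Suc) simp_all
  have "p ! (idx ! 0) < p ! (idx ! 1)" using C[rule_format, of 0 1] by simp
  moreover have "p ! (idx ! 1) < p ! (idx ! 3)" using C[rule_format, of 1 3] by simp
  moreover have "p ! (idx ! 3) < p ! (idx ! 2)" using C[rule_format, of 3 2] by simp
  ultimately show ?thesis using that idx_facts[OF L S B] by blast
qed

lemma c2143E:
  assumes "contains p [2,1,4,3]"
  obtains i j k l where "i<j" "j<k" "k<l" "l<length p" "p!j < p!i" "p!i < p!l" "p!l < p!k"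
proof -
  obtain idx where H: "length idx = length [2,1,4,3::nat] \<and> sorted_wrt (<) idx \<and> (\<forall>j\<in>set idx. j < length p)
      \<and> (\<forall>a < length [2,1,4,3::nat]. \<forall>b < length [2,1,4,3::nat]. (p ! (idx ! a) < p ! (idx ! b)) \<longleftrightarrow> ([2,1,4,3::nat] ! a < [2,1,4,3::nat] ! b))"
    using assms unfolding contains_def by (rule exE)
  have L: "length idx = 4" and S: "sorted_wrt (<) idx" and B: "\<forall>j\<in>set idx. j < length p"
    and C: "\<forall>a < 4. \<forall>b < 4. (p ! (idx ! a) < p ! (idx ! b)) \<longleftrightarrow> ([2,1,4,3::nat] ! a < [2,1,4,3::nat] ! b)"
    using H by (simp_all only: list.size numeral_eq_Suc) simp_all
  have "p ! (idx ! 1) < p ! (idx ! 0)" using C[rule_format, of 1 0] by simp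
  moreover have "p ! (idx ! 0) < p ! (idx ! 3)" using C[rule_format, of 0 3] by simp
  moreover have "p ! (idx ! 3) < p ! (idx ! 2)" using C[rule_format, of 3 2] by simp
  ultimately show ?thesis using that idx_facts[OF L S B] by blast
qed

lemma c231E:
  assumes "contains p [2,3,1]"
  obtains i j k where "i<j" "j<k" "k<length p" "p!k < p!i" "p!i < p!j"
proof -
  obtain idx where H: "length idx = length [2,3,1::nat] \<and> sorted_wrt (<) idx \<and> (\<forall>j\<in>set idx. j < length p)
      \<and> (\<forall>a < length [2,3,1::nat]. \<forall>b < length [2,3,1::nat]. (p ! (idx ! a) < p ! (idx ! b)) \<longleftrightarrow> ([2,3,1::nat] ! a < [2,3,1::nat] ! b))"
    using assms unfolding contains_def by (rule exE)
  have L: "length idx = 3" and S: "sorted_wrt (<) idx" and B: "\<forall>j\<in>set idx. j < length p"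
    and C: "\<forall>a < 3. \<forall>b < 3. (p ! (idx ! a) < p ! (idx ! b)) \<longleftrightarrow> ([2,3,1::nat] ! a < [2,3,1::nat] ! b)"
    using H by (simp_all only: list.size numeral_eq_Suc) simp_all
  have "p ! (idx ! 2) < p ! (idx ! 0)" using C[rule_format, of 2 0] by simp
  moreover have "p ! (idx ! 0) < p ! (idx ! 1)" using C[rule_format, of 0 1] by simp
  moreover have "idx ! 0 < idx ! 1" "idx ! 1 < idx ! 2" "idx ! 2 < length p"
    using L S B by (auto simp: sorted_wrt_iff_nth_less)
  ultimately show ?thesis using that by blast
qed

lemma all4: "(\<forall>a<(4::nat). P a) \<longleftrightarrow> P 0 \<and> P 1 \<and> P 2 \<and> P 3"
  by (auto simp: less_Suc_eq numeral_eq_Suc)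
lemma all3: "(\<forall>a<(3::nat). P a) \<longleftrightarrow> P 0 \<and> P 1 \<and> P 2"
  by (auto simp: less_Suc_eq numeral_eq_Suc)

lemma c1243I:
  assumes "i<j" "j<k" "k<l" "l<length p" "p!i < p!j" "p!j < p!l" "p!l < p!k"
  shows "contains p [1,2,4,3]"
  unfolding contains_def
  apply (rule exI[of _ "[i,j,k,l]"])
  using assms by (simp add: All_less_Suc numeral_eq_Suc)

lemma c2143I:
  assumes "i<j" "j<k" "k<l" "l<length p" "p!j < p!i" "p!i < p!l" "p!l < p!k"
  shows "contains p [2,1,4,3]"
  unfolding contains_def
  apply (rule exI[of _ "[i,j,k,l]"])
  using assms by (simp add: All_less_Suc numeral_eq_Suc)

lemma c231I:
  assumes "i<j" "j<k" "k<length p" "p!k < p!i" "p!i < p!j"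
  shows "contains p [2,3,1]"
  unfolding contains_def
  apply (rule exI[of _ "[i,j,k]"])
  using assms by (simp add: All_less_Suc numeral_eq_Suc)

definition shape :: "nat list \<Rightarrow> nat \<Rightarrow> nat \<Rightarrow> bool" where
  "shape p t m \<longleftrightarrow> t \<le> m \<and> m < length p
    \<and> (\<forall>i j. i < j \<and> j \<le> t \<longrightarrow> p!j < p!i)
    \<and> (\<forall>i j. t < i \<and> i < j \<and> j \<le> m \<longrightarrow> p!j < p!i)
    \<and> (\<forall>i j. m \<le> i \<and> i < j \<and> j < length p \<longrightarrow> p!i < p!j)
    \<and> (0 < t \<and> t + 2 \<le> m \<longrightarrow> p!(t+1) < p!(t-1))"

lemma shape_avoid:
  assumes sh: "shape p t m" and pt: "p!t = 1" and pos: "\<forall>x<length p. 1 \<le> p!x"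
  shows "\<not> contains p [1,2,4,3]" "\<not> contains p [2,1,4,3]" "\<not> contains p [2,3,1]"
proof -
  have tm: "t \<le> m" and mn: "m < length p"
    and P1: "\<And>i j. i < j \<Longrightarrow> j \<le> t \<Longrightarrow> p!j < p!i"
    and P2: "\<And>i j. t < i \<Longrightarrow> i < j \<Longrightarrow> j \<le> m \<Longrightarrow> p!j < p!i"
    and P3: "\<And>i j. m \<le> i \<Longrightarrow> i < j \<Longrightarrow> j < length p \<Longrightarrow> p!i < p!j"
    and C: "0 < t \<Longrightarrow> t + 2 \<le> m \<Longrightarrow> p!(t+1) < p!(t-1)"
    using sh unfolding shape_def by blast+
  have D: "p!j < p!i" if "i < t" "t < j" "j < m" for i j
  proof -
    have "p!(t-1) \<le> p!i"
    proof (cases "i = t - 1")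
      case False
      then have "i < t - 1" using that by arith
      then show ?thesis using P1[of i "t-1"] by auto
    qed simp
    moreover have "p!j \<le> p!(t+1)" using P2[of "t+1" j] that by (cases "j = t+1") auto
    ultimately show ?thesis using C that by fastforce
  qed
  show "\<not> contains p [1,2,4,3]"
  proof
    assume "contains p [1,2,4,3]"
    then obtain i j k l where h: "i<j" "j<k" "k<l" "l<length p" "p!i < p!j" "p!j < p!l" "p!l < p!k"
      by (rule c1243E)
    show False
    proof (cases "j \<le> t")
      case True then show ?thesis using P1[of i j] h by auto
    next
      case False
      show ?thesis
      proof (cases "k \<le> m")
        case True then show ?thesis using P2[of j k] h False by auto
      next
        case F2: False then show ?thesis using P3[of k l] h by auto
      qed
    qed
  qed
  show "\<not> contains p [2,1,4,3]"
  proof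
    assume "contains p [2,1,4,3]"
    then obtain i j k l where h: "i<j" "j<k" "k<l" "l<length p" "p!j < p!i" "p!i < p!l" "p!l < p!k"
      by (rule c2143E)
    have km: "k < m" using P3[of k l] h by (cases "m \<le> k") auto
    show False
    proof (cases "t < i")
      case True then show ?thesis using P2[of i k] h km by auto
    next
      case False
      show ?thesis
      proof (cases "i = t")
        case True then show ?thesis using pt pos h by (metis less_le_trans not_less order.strict_trans)
      next
        case F2: False
        then have "i < t" using False by auto
        moreover have "t < k"
        proof (rule ccontr)
          assume "\<not> t < k"
          then show False using P1[of i k] h by auto
        qed
        ultimately show ?thesis using D[of i k] km h by auto
      qed
    qed
  qed
  show "\<not> contains p [2,3,1]"
  proof
    assume "contains p [2,3,1]"
    then obtain i j k where h: "i<j" "j<k" "k<length p" "p!k < p!i" "p!i < p!j"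
      by (rule c231E)
    have jt: "t < j" using P1[of i j] h by (cases "j \<le> t") auto
    have jm: "j \<le> m" using P3[of j k] h by (cases "m \<le> j") auto
    have it: "i < t"
    proof -
      have "i \<noteq> t" using pt pos h by (metis less_le_trans not_less order.strict_trans)
      moreover have "\<not> t < i" using P2[of i j] h jm by auto
      ultimately show ?thesis by auto
    qed
    show False
    proof (cases "j < m")
      case True then show ?thesis using D[of i j] it jt h by auto
    next
      case False
      then have jm': "j = m" using jm by auto
      show ?thesis
      proof (cases "t + 2 \<le> m")
        case True
        have "p!j < p!i" using D[of i "t+1"] it True P2[of "t+1" j] jm' jt
          by (cases "j = t+1") auto
        then show ?thesis using h by auto
      next
        case False
        then have "j = t + 1" using jt jm' by auto
        then show ?thesis using P3[of j k] h jm' by auto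
      qed
    qed
  qed
qed

lemma avoid_shape:
  assumes dist: "distinct p" and pt: "p!t = 1" and tn: "t < length p"
    and pos: "\<forall>x<length p. 1 \<le> p!x"
    and a1: "\<not> contains p [1,2,4,3]" and a2: "\<not> contains p [2,1,4,3]" and a3: "\<not> contains p [2,3,1]"
  shows "\<exists>m. shape p t m"
proof -
  have inj: "p!i \<noteq> p!j" if "i < length p" "j < length p" "i \<noteq> j" for i j
    using dist that by (simp add: nth_eq_iff_index_eq)
  have P1: "p!j < p!i" if "i < j" "j \<le> t" for i j
  proof (rule ccontr)
    assume "\<not> p!j < p!i"
    then have "p!i < p!j" using inj[of i j] that tn by auto
    show False
    proof (cases "j = t")
      case True
      have "1 \<le> p!i" using pos that tn by auto
      then show ?thesis using pt \<open>p!i < p!j\<close> True by simp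
    next
      case False
      have "1 \<le> p!i" "p!i \<noteq> 1" using pos inj[of i t] that tn pt by auto
      then have "p!t < p!i" using pt by simp
      then show ?thesis using c231I[of i j t p] that tn \<open>p!i < p!j\<close> a3 False by simp
    qed
  qed
  show ?thesis
  proof (cases "t + 1 < length p")
    case False
    then have tn1: "t = length p - 1" using tn by auto
    have "shape p t t" unfolding shape_def using tn P1 tn1 by auto
    then show ?thesis by blast
  next
    case True
    define V where "V = Min ((!) p ` {t+1..<length p})"
    have fin: "finite ((!) p ` {t+1..<length p})" by simp
    have ne: "(!) p ` {t+1..<length p} \<noteq> {}" using True by auto
    obtain m where m1: "t < m" and m2: "m < length p" and mV: "p!m = V"
      using Min_in[OF fin ne] unfolding V_def[symmetric] by (auto simp: Suc_le_eq)
    have mmin: "p!m \<le> p!i" if "t < i" "i < length p" for i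
      unfolding mV V_def using that by (intro Min_le) auto
    have P2: "p!j < p!i" if "t < i" "i < j" "j \<le> m" for i j
    proof (rule ccontr)
      assume "\<not> p!j < p!i"
      then have ij: "p!i < p!j" using inj[of i j] that m2 by auto
      show False
      proof (cases "j = m")
        case True then show ?thesis using mmin[of i] that m2 ij by auto
      next
        case False
        then have "j < m" using that by auto
        moreover have "p!m < p!i" using mmin[of i] inj[of i m] that m2 \<open>j < m\<close> by (simp add: order.order_iff_strict)
        ultimately show ?thesis using c231I[of i j m p] that m2 ij a3 by auto
      qed
    qed
    have P3: "p!i < p!j" if "m \<le> i" "i < j" "j < length p" for i j
    proof (rule ccontr)
      assume "\<not> p!i < p!j"
      then have ij: "p!j < p!i" using inj[of i j] that by auto
      show False
      proof (cases "i = m")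
        case True then show ?thesis using mmin[of j] that m1 ij by auto
      next
        case False
        then have "m < i" using that by auto
        moreover have "p!m < p!j" using mmin[of j] inj[of j m] that m1 by (simp add: order.order_iff_strict)
        moreover have "p!t < p!m" using pt pos[rule_format, of m] inj[of t m] m1 m2 tn by simp
        ultimately show ?thesis using c1243I[of t m i j p] that m1 ij a1 by auto
      qed
    qed
    have C: "p!(t+1) < p!(t-1)" if "0 < t" "t + 2 \<le> m"
    proof (rule ccontr)
      assume "\<not> p!(t+1) < p!(t-1)"
      moreover have "t - 1 \<noteq> t + 1" "t - 1 < length p" using that tn by auto
      ultimately have h: "p!(t-1) < p!(t+1)" using inj[of "t-1" "t+1"] True by auto
      have tl: "t - 1 < length p" "t \<noteq> t - 1" "t - 1 \<noteq> m" using that tn by auto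
      then have h2: "p!t < p!(t-1)" using pt pos[rule_format, of "t-1"] inj[of t "t-1"] tn by simp
      have h3: "p!m < p!(t+1)" using P2[of "t+1" m] that by auto
      show False
      proof (cases "p!m < p!(t-1)")
        case True
        then show ?thesis using c231I[of "t-1" "t+1" m p] that h m2 a3 by auto
      next
        case False
        then have "p!(t-1) < p!m" using inj[of "t-1" m] tl m2 by simp
        then show ?thesis using c2143I[of "t-1" t "t+1" m p] that h h2 h3 m2 a2 by auto
      qed
    qed
    have "shape p t m" unfolding shape_def using m1 m2 P1 P2 P3 C by auto
    then show ?thesis by blast
  qed
qed

lemma dec_chain:
  fixes p :: "nat list"
  assumes "\<And>k. a \<le> k \<Longrightarrow> k < b \<Longrightarrow> p!(k+1) < p!k"
  shows "a \<le> i \<Longrightarrow> i < j \<Longrightarrow> j \<le> b \<Longrightarrow> p!j < p!i"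
proof (induction j)
  case 0 then show ?case by simp
next
  case (Suc j)
  show ?case
  proof (cases "i = j")
    case True then show ?thesis using assms[of j] Suc by simp
  next
    case False
    then have "p!j < p!i" using Suc by simp
    moreover have "p!(j+1) < p!j" using assms[of j] Suc False by simp
    ultimately show ?thesis by simp
  qed
qed

lemma inc_chain:
  fixes p :: "nat list"
  assumes "\<And>k. a \<le> k \<Longrightarrow> k < b \<Longrightarrow> p!k < p!(k+1)"
  shows "a \<le> i \<Longrightarrow> i < j \<Longrightarrow> j \<le> b \<Longrightarrow> p!i < p!j"
proof (induction j)
  case 0 then show ?case by simp
next
  case (Suc j)
  show ?case
  proof (cases "i = j")
    case True then show ?thesis using assms[of j] Suc by simp
  next
    case False
    then have "p!i < p!j" using Suc by simp
    moreover have "p!j < p!(j+1)" using assms[of j] Suc False by simp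
    ultimately show ?thesis by simp
  qed
qed

lemma desc_iff: "k + 1 < length p \<Longrightarrow> (k + 1 \<in> descents p \<longleftrightarrow> p!(k+1) < p!k)"
  unfolding descents_def by auto

lemma desc_sub: "descents p \<subseteq> {1..length p - 1}"
  unfolding descents_def by auto

lemma shape_rhs:
  assumes sh: "shape p t m" and pt: "p!t = 1" and pos: "\<forall>x<length p. 1 \<le> p!x"
    and s: "s = t + 1" and n: "n = length p"
  shows "(s > card (descents p) \<and> descents p = {1..card (descents p)})
      \<or> (s \<le> card (descents p)
         \<and> descents p = {1..s-1} \<union> {s+1..card (descents p) + 1}
         \<and> (1 < s \<and> s < n \<longrightarrow> p ! (s - 2) > p ! s))"
proof -
  have tm: "t \<le> m" and mn: "m < length p"
    and P1: "\<And>i j. i < j \<Longrightarrow> j \<le> t \<Longrightarrow> p!j < p!i"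
    and P2: "\<And>i j. t < i \<Longrightarrow> i < j \<Longrightarrow> j \<le> m \<Longrightarrow> p!j < p!i"
    and P3: "\<And>i j. m \<le> i \<Longrightarrow> i < j \<Longrightarrow> j < length p \<Longrightarrow> p!i < p!j"
    and C: "0 < t \<Longrightarrow> t + 2 \<le> m \<Longrightarrow> p!(t+1) < p!(t-1)"
    using sh unfolding shape_def by blast+
  have Dchar: "k \<in> descents p \<longleftrightarrow> (1 \<le> k \<and> k \<le> t) \<or> (t + 2 \<le> k \<and> k \<le> m)" for k
  proof (cases "1 \<le> k \<and> k < length p")
    case False
    then show ?thesis using desc_sub[of p] tm mn by auto
  next
    case True
    then obtain k' where k': "k = k' + 1" by (metis add.commute add_diff_inverse_nat less_one not_le)
    have kd: "k \<in> descents p \<longleftrightarrow> p!(k'+1) < p!k'" using desc_iff[of k' p] True k' by simp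
    show ?thesis
    proof (cases "k \<le> t")
      case True then show ?thesis using kd P1[of k' "k'+1"] k' by auto
    next
      case F1: False
      show ?thesis
      proof (cases "k = t + 1")
        case True
        have "1 \<le> p!k" using pos \<open>1 \<le> k \<and> k < length p\<close> by auto
        then show ?thesis using kd k' True pt by auto
      next
        case F2: False
        show ?thesis
        proof (cases "k \<le> m")
          case True then show ?thesis using kd P2[of k' "k'+1"] k' F1 F2 by auto
        next
          case False then show ?thesis using kd P3[of k' "k'+1"] k' \<open>1 \<le> k \<and> k < length p\<close> tm by auto
        qed
      qed
    qed
  qed
  show ?thesis
  proof (cases "t + 2 \<le> m")
    case False
    then have D: "descents p = {1..t}" by (intro set_eqI) (auto simp only: Dchar atLeastAtMost_iff)
    then show ?thesis using s by simp
  next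
    case True
    have D: "descents p = {1..t} \<union> {t+2..m}" by (intro set_eqI) (simp only: Dchar atLeastAtMost_iff Un_iff)
    have "card (descents p) = t + (m - (t + 1))" unfolding D
      by (subst card_Un_disjoint) auto
    then have cd: "card (descents p) = m - 1" using True by simp
    have "descents p = {1..s-1} \<union> {s+1..card (descents p) + 1}" using D cd s True by simp
    moreover have "s \<le> card (descents p)" using cd s True by simp
    moreover have "p ! (s - 2) > p ! s" if "1 < s" using C[of] that s True
      by (simp add: numeral_2_eq_2)
    ultimately show ?thesis by blast
  qed
qed

lemma rhs_shape:
  assumes dist: "distinct p" and pt: "p!t = 1" and tn: "t < length p"
    and pos: "\<forall>x<length p. 1 \<le> p!x"
    and s: "s = t + 1" and n: "n = length p"
    and R: "(s > card (descents p) \<and> descents p = {1..card (descents p)})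
      \<or> (s \<le> card (descents p)
         \<and> descents p = {1..s-1} \<union> {s+1..card (descents p) + 1}
         \<and> (1 < s \<and> s < n \<longrightarrow> p ! (s - 2) > p ! s))"
  shows "\<exists>m. shape p t m"
proof -
  have inj: "p!i \<noteq> p!j" if "i < length p" "j < length p" "i \<noteq> j" for i j
    using dist that by (simp add: nth_eq_iff_index_eq)
  define d where "d = card (descents p)"
  have nodesc: "p!k < p!(k+1)" if "k + 1 < length p" "k + 1 \<notin> descents p" for k
    using desc_iff[of k p] that inj[of k "k+1"] by auto
  have desc: "p!(k+1) < p!k" if "k + 1 < length p" "k + 1 \<in> descents p" for k
    using desc_iff[of k p] that by auto
  from R show ?thesis
  proof
    assume A: "s > card (descents p) \<and> descents p = {1..card (descents p)}"
    then have dt: "d \<le> t" and D: "descents p = {1..d}" using s unfolding d_def by auto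
    have dn: "d < length p"
      using tn dt by simp
    have dec: "p!(k+1) < p!k" if "0 \<le> k" "k < d" for k
      using desc[of k] D that dn by auto
    have inc: "p!k < p!(k+1)" if "d \<le> k" "k < length p - 1" for k
      using nodesc[of k] D that by auto
    have td: "t = d"
    proof (rule ccontr)
      assume "t \<noteq> d"
      then have "p!d < p!t" using inc_chain[of d "length p - 1" p d t, OF inc] dt tn by auto
      moreover have "1 \<le> p!d" using pos dn by auto
      ultimately show False using pt by simp
    qed
    have "shape p t t" unfolding shape_def
      using tn td dec_chain[of 0 d p, OF dec] inc_chain[of d "length p - 1" p, OF inc]
      by auto
    then show ?thesis by blast
  next
    assume A: "s \<le> card (descents p)
         \<and> descents p = {1..s-1} \<union> {s+1..card (descents p) + 1}
         \<and> (1 < s \<and> s < n \<longrightarrow> p ! (s - 2) > p ! s)"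
    then have sd: "t + 1 \<le> d" and D: "descents p = {1..t} \<union> {t+2..d+1}"
      and C0: "1 < s \<and> s < n \<longrightarrow> p ! (s - 2) > p ! s"
      using s unfolding d_def by auto
    have "d + 1 \<in> descents p" using D sd by auto
    then have dn: "d + 2 \<le> length p" using desc_sub[of p] by auto
    have P1: "p!(k+1) < p!k" if "0 \<le> k" "k < t" for k
      using desc[of k] D that dn sd by auto
    have P2: "p!(k+1) < p!k" if "t + 1 \<le> k" "k < d + 1" for k
      using desc[of k] D that dn by auto
    have P3: "p!k < p!(k+1)" if "d + 1 \<le> k" "k < length p - 1" for k
      using nodesc[of k] D that sd by auto
    have C: "p!(t+1) < p!(t-1)" if "0 < t"
    proof -
      have "1 < s" "s < n" using that s sd dn n by auto
      then show ?thesis using C0 s by (simp add: numeral_2_eq_2)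
    qed
    have "shape p t (d+1)" unfolding shape_def
    proof (intro conjI allI impI)
      show "t \<le> d + 1" "d + 1 < length p" using sd dn by auto
    next
      fix i j assume "i < j \<and> j \<le> t" then show "p!j < p!i"
        using dec_chain[of 0 t p, OF P1] by auto
    next
      fix i j assume "t < i \<and> i < j \<and> j \<le> d + 1" then show "p!j < p!i"
        using dec_chain[of "t+1" "d+1" p, OF P2] by auto
    next
      fix i j assume "d + 1 \<le> i \<and> i < j \<and> j < length p" then show "p!i < p!j"
        using inc_chain[of "d+1" "length p - 1" p, OF P3] by auto
    next
      assume "0 < t \<and> t + 2 \<le> d + 1" then show "p!(t+1) < p!(t-1)" using C by auto
    qed
    then show ?thesis by blast
  qed
qed

theorem corollary3p13:
  fixes n s :: nat and p :: "nat list"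
  assumes "is_perm n p"
    and "1 \<le> s" and "s \<le> n" and "p ! (s - 1) = 1"
  shows "(avoids p [1,2,4,3] \<and> avoids p [2,1,4,3] \<and> avoids p [2,3,1]) \<longleftrightarrow>
     ((s > card (descents p) \<and> descents p = {1..card (descents p)})
      \<or> (s \<le> card (descents p)
         \<and> descents p = {1..s-1} \<union> {s+1..card (descents p) + 1}
         \<and> (1 < s \<and> s < n \<longrightarrow> p ! (s - 2) > p ! s)))"
proof -
  define t where "t = s - 1"
  have n: "n = length p" and dist: "distinct p" and sp: "set p = {1..n}"
    using assms(1) unfolding is_perm_def by auto
  have s: "s = t + 1" using assms(2) t_def by simp
  have tn: "t < length p" using assms(3) s n by simp
  have pt: "p!t = 1" using assms(4) t_def by simp
  have pos: "\<forall>x<length p. 1 \<le> p!x"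
  proof (intro allI impI)
    fix x assume "x < length p"
    then have "p!x \<in> set p" by simp
    then show "1 \<le> p!x" using sp by auto
  qed
  show ?thesis
  proof
    assume "avoids p [1,2,4,3] \<and> avoids p [2,1,4,3] \<and> avoids p [2,3,1]"
    then obtain m where "shape p t m"
      using avoid_shape[OF dist pt tn pos] unfolding avoids_def by blast
    then show "(s > card (descents p) \<and> descents p = {1..card (descents p)})
      \<or> (s \<le> card (descents p)
         \<and> descents p = {1..s-1} \<union> {s+1..card (descents p) + 1}
         \<and> (1 < s \<and> s < n \<longrightarrow> p ! (s - 2) > p ! s))"
      using shape_rhs[OF _ pt pos s n] by blast
  next
    assume R: "(s > card (descents p) \<and> descents p = {1..card (descents p)})
      \<or> (s \<le> card (descents p)
         \<and> descents p = {1..s-1} \<union> {s+1..card (descents p) + 1}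
         \<and> (1 < s \<and> s < n \<longrightarrow> p ! (s - 2) > p ! s))"
    obtain m where "shape p t m" using rhs_shape[OF dist pt tn pos s n R] by blast
    then show "avoids p [1,2,4,3] \<and> avoids p [2,1,4,3] \<and> avoids p [2,3,1]"
      using shape_avoid[OF _ pt pos] unfolding avoids_def by blast
  qed
qed

end
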